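(* Let $P_{2n+1}$ ($n\ge 1$) be a weighted path with vertices $v_1,\dots,v_{2n+1}$ and edges $v_iv_{i+1}$, $1\le i\le 2n$. Then: (i) $P_{2n+1}$ is a spanning subtree of $P_{2n+1}^{\#}$ (i.e. each $v_iv_{i+1}$ is an edge of $P_{2n+1}^{\#}$); (ii) $v_iv_j$ is an edge of $P_{2n+1}^{\#}$ if and only if $i+j$ is odd; (iii) for $n\ge 2$, $P_{2n+1}^{\#}$ has no pendant vertices.
   Context: A weighted graph has a nonzero real weight on each edge; its adjacency matrix $A$ has $(i,j)$ entry equal to the weight of edge $v_iv_j$, or $0$ if no edge. $A^{\#}$ is the group inverse of $A$ (unique $X$ with $AXA=A$, $XAX=X$, $AX=XA$); the group inverse graph $G^{\#}$ is the weighted graph on the same vertex set with $v_iv_j$ an edge iff $(A^{\#})_{ij}\neq 0$, weighted by that entry. A subgraph relation between weighted graphs refers to their underlying graphs. A pendant vertex is a vertex of degree one. *)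

theory Defs
  imports "Jordan_Normal_Form.Matrix"
begin

text \<open>Vertices v_1..v_N are indexed 0..N-1. The weighted path on N vertices has
  edge (i, i+1) with weight w i, for i < N - 1.\<close>
definition path_adj :: "nat \<Rightarrow> (nat \<Rightarrow> real) \<Rightarrow> real mat" where
  "path_adj N w = mat N N (\<lambda>(i, j). if j = i + 1 then w i else if i = j + 1 then w j else 0)"

definition is_group_inverse :: "'a::semiring_1 mat \<Rightarrow> 'a mat \<Rightarrow> bool" where
  "is_group_inverse A X \<longleftrightarrow> X \<in> carrier_mat (dim_row A) (dim_col A) \<and>
     A * X * A = A \<and> X * A * X = X \<and> A * X = X * A"

definition group_inverse :: "'a::semiring_1 mat \<Rightarrow> 'a mat" where
  "group_inverse A = (THE X. is_group_inverse A X)"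

definition mat_edge :: "'a::zero mat \<Rightarrow> nat \<Rightarrow> nat \<Rightarrow> bool" where
  "mat_edge M i j \<longleftrightarrow> i < dim_row M \<and> j < dim_row M \<and> i \<noteq> j \<and> M $$ (i, j) \<noteq> 0"

definition mat_degree :: "'a::zero mat \<Rightarrow> nat \<Rightarrow> nat" where
  "mat_degree M i = card {j. mat_edge M i j}"

end

theory Submission
  imports Defs
begin

lemma mult_mat_sum:
  fixes A B :: "real mat"
  assumes "A \<in> carrier_mat N N" "B \<in> carrier_mat N N" "i < N" "j < N"
  shows "(A * B) $$ (i, j) = (\<Sum>m<N. A $$ (i, m) * B $$ (m, j))"
  using assms by (simp add: scalar_prod_def atLeast0LessThan)

lemma tri_sum:
  fixes w f :: "nat \<Rightarrow> real"
  assumes "i < N"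
  shows "(\<Sum>m<N. (if m = i+1 then w i else if i = m+1 then w m else 0) * f m)
    = (if i+1 < N then w i * f (i+1) else 0) + (if 0 < i then w (i-1) * f (i-1) else 0)"
proof -
  have "(\<Sum>m<N. (if m = i+1 then w i else if i = m+1 then w m else 0) * f m)
     = (\<Sum>m<N. (if m = i+1 then w i * f m else 0) + (if m = i - 1 \<and> 0 < i then w m * f m else 0))"
    by (rule sum.cong) auto
  also have "\<dots> = (\<Sum>m<N. (if m = i+1 then w i * f m else 0)) + (\<Sum>m<N. (if m = i - 1 \<and> 0 < i then w m * f m else 0))"
    by (rule sum.distrib)
  also have "(\<Sum>m<N. (if m = i+1 then w i * f m else 0)) = (if i+1 < N then w i * f (i+1) else 0)"
    by (simp add: sum.delta')
  also have "(\<Sum>m<N. (if m = i - 1 \<and> 0 < i then w m * f m else 0)) = (if 0 < i then w (i-1) * f (i-1) else 0)"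
  proof (cases "0 < i")
    case True
    then show ?thesis using assms by (simp add: sum.delta')
  qed simp
  finally show ?thesis .
qed

lemma sum_even_odd:
  fixes f :: "nat \<Rightarrow> real"
  shows "(\<Sum>m<2*n+1. f m) = (\<Sum>k\<le>n. f (2*k)) + (\<Sum>k<n. f (2*k+1))"
proof (induction n)
  case 0
  then show ?case by simp
next
  case (Suc n)
  have "(\<Sum>m<2*Suc n+1. f m) = (\<Sum>m<2*n+1. f m) + f (2*n+1) + f (2*n+2)"
    by (simp add: numeral_2_eq_2)
  then show ?case using Suc by simp
qed

lemma group_inverse_unique:
  fixes A X Y :: "real mat"
  assumes A: "A \<in> carrier_mat N N" and X: "X \<in> carrier_mat N N" and Y: "Y \<in> carrier_mat N N"
    and x1: "A * X * A = A" and x2: "X * A * X = X" and x3: "A * X = X * A"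
    and y1: "A * Y * A = A" and y2: "Y * A * Y = Y" and y3: "A * Y = Y * A"
  shows "X = Y"
proof -
  have AAX: "A * A * X = A"
    using A X x1 x3 by (metis assoc_mult_mat mult_carrier_mat)
  have "A * X = (A * Y * A) * X" using y1 by simp
  also have "\<dots> = (Y * A) * (A * X)" using A X Y y3 by (metis assoc_mult_mat mult_carrier_mat)
  also have "\<dots> = Y * (A * A * X)" using A X Y by (metis assoc_mult_mat mult_carrier_mat)
  also have "\<dots> = Y * A" using AAX by simp
  finally have e: "A * X = Y * A" .
  have "X = X * (A * X)" using x2 A X by (metis assoc_mult_mat)
  also have "\<dots> = X * (A * Y)" using e y3 by simp
  also have "\<dots> = (X * A) * Y" using A X Y by (metis assoc_mult_mat)
  also have "\<dots> = (Y * A) * Y" using e x3 by simp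
  also have "\<dots> = Y" using y2 .
  finally show ?thesis .
qed

context
  fixes n :: nat and w :: "nat \<Rightarrow> real"
  assumes n1: "n \<ge> 1" and wnz: "\<And>i. i < 2 * n \<Longrightarrow> w i \<noteq> 0"
begin

primrec zz :: "nat \<Rightarrow> real" where
  "zz 0 = 1"
| "zz (Suc k) = - w (2*k) / w (2*k+1) * zz k"

definition Pp :: "nat \<Rightarrow> real" where "Pp l = (\<Sum>m\<le>l. (zz m)^2)"
definition SS :: real where "SS = Pp n"
definition Hh :: "nat \<Rightarrow> nat \<Rightarrow> real" where
  "Hh k l = (if k \<le> l then 1 else 0) - Pp l / SS"
definition Fx :: "nat \<Rightarrow> nat \<Rightarrow> real" where
  "Fx l k = zz k * Hh k l / (w (2*l) * zz l)"
definition Xf :: "nat \<Rightarrow> nat \<Rightarrow> real" where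
  "Xf i j = (if odd i \<and> even j then Fx (i div 2) (j div 2)
      else if even i \<and> odd j then Fx (j div 2) (i div 2) else 0)"
definition Xm :: "real mat" where
  "Xm = mat (2*n+1) (2*n+1) (\<lambda>(i,j). Xf i j)"
definition zv :: "nat \<Rightarrow> real" where "zv i = (if even i then zz (i div 2) else 0)"
definition Pm :: "real mat" where
  "Pm = mat (2*n+1) (2*n+1) (\<lambda>(i,j). (if i = j then 1 else 0) - zv i * zv j / SS)"

lemma zz_nz: "k \<le> n \<Longrightarrow> zz k \<noteq> 0"
proof (induction k)
  case (Suc k)
  then show ?case using wnz[of "2*k"] wnz[of "2*k+1"] by simp
qed simp

lemma zz_rel: "k < n \<Longrightarrow> w (2*k+1) * zz (Suc k) = - w (2*k) * zz k"
  using wnz[of "2*k+1"] by simp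

declare zz.simps(2)[simp del]

lemma Pp_ge1: "Pp l \<ge> 1"
proof -
  have "Pp l \<ge> (zz 0)^2" unfolding Pp_def
    by (rule member_le_sum) auto
  then show ?thesis by simp
qed

lemma SS_pos: "SS > 0" unfolding SS_def using Pp_ge1[of n] by simp

lemma Pp_Suc: "Pp (Suc l) = Pp l + (zz (Suc l))^2" unfolding Pp_def by simp

lemma Pp_mono: "l \<le> m \<Longrightarrow> Pp l \<le> Pp m"
  unfolding Pp_def by (rule sum_mono2) auto

lemma Pp_lt: "l < n \<Longrightarrow> Pp l < SS"
proof -
  assume l: "l < n"
  then obtain m where m: "n = Suc m" and "l \<le> m" using n1 by (cases n) auto
  then have "Pp l \<le> Pp m" by (rule_tac Pp_mono) 
  moreover have "(zz n)^2 > 0" using zz_nz[of n] by simp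
  moreover have "SS = Pp m + (zz n)^2" unfolding SS_def using m Pp_Suc by simp
  ultimately show ?thesis by linarith
qed

lemma Fx_nz: "l < n \<Longrightarrow> k \<le> n \<Longrightarrow> Fx l k \<noteq> 0"
proof -
  assume l: "l < n" and k: "k \<le> n"
  have "Hh k l \<noteq> 0"
  proof (cases "k \<le> l")
    case True
    then show ?thesis unfolding Hh_def using Pp_lt[OF l] SS_pos by (simp add: field_simps)
  next
    case False
    then show ?thesis unfolding Hh_def using Pp_ge1[of l] SS_pos by (simp add: field_simps)
  qed
  then show ?thesis unfolding Fx_def using zz_nz[OF k] zz_nz[of l] l wnz[of "2*l"] by simp
qed

lemma Hh_diff: "Hh k' (Suc l) - Hh k' l = (if k' = Suc l then 1 else 0) - (zz (Suc l))^2 / SS"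
  unfolding Hh_def Pp_Suc by (simp add: add_divide_distrib del: zz.simps)

lemma Hh_diff2: "Hh l l' - Hh (Suc l) l' = (if l = l' then 1 else 0)"
  unfolding Hh_def by auto

lemma Pp_0: "Pp 0 = 1" unfolding Pp_def by simp

lemma AX_odd:
  assumes l: "l < n" and l': "l' < n"
  shows "w (2*l+1) * Fx l' (Suc l) + w (2*l) * Fx l' l = (if l = l' then 1 else 0)"
proof -
  have d: "w (2*l') * zz l' \<noteq> 0" using wnz[of "2*l'"] zz_nz[of l'] l' by simp
  have "w (2*l+1) * Fx l' (Suc l) + w (2*l) * Fx l' l
     = (w (2*l+1) * zz (Suc l) * Hh (Suc l) l' + w (2*l) * zz l * Hh l l') / (w (2*l') * zz l')"
    unfolding Fx_def by (simp add: add_divide_distrib)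
  also have "\<dots> = w (2*l) * zz l * (Hh l l' - Hh (Suc l) l') / (w (2*l') * zz l')"
    using zz_rel[OF l] d by (simp add: field_simps)
  also have "\<dots> = (if l = l' then 1 else 0)"
    unfolding Hh_diff2 using d by auto
  finally show ?thesis .
qed

lemma L1: "k0 < n \<Longrightarrow> w (2*k0+1) * Fx k0 k' = - zz k' * Hh k' k0 / zz (Suc k0)"
proof -
  assume k0: "k0 < n"
  have a: "w (2*k0) \<noteq> 0" "w (2*k0+1) \<noteq> 0" "zz k0 \<noteq> 0" "zz (Suc k0) \<noteq> 0"
    using wnz[of "2*k0"] wnz[of "2*k0+1"] zz_nz[of k0] zz_nz[of "Suc k0"] k0 by auto
  have r: "w (2*k0+1) * zz (Suc k0) = - w (2*k0) * zz k0" using zz_rel[OF k0] .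
  show ?thesis unfolding Fx_def using a
    by (simp add: field_simps zz.simps(2))
qed

lemma L2: "k < n \<Longrightarrow> w (2*k) * Fx k k' = zz k' * Hh k' k / zz k"
proof -
  assume k: "k < n"
  have a: "w (2*k) \<noteq> 0" using wnz[of "2*k"] k by auto
  show ?thesis unfolding Fx_def using a by (simp add: field_simps)
qed

lemma AX_even:
  assumes k: "k \<le> n" and k': "k' \<le> n"
  shows "(if k < n then w (2*k) * Fx k k' else 0) + (if 0 < k then w (2*k-1) * Fx (k-1) k' else 0)
    = (if k = k' then 1 else 0) - zz k * zz k' / SS"
proof -
  have S: "SS \<noteq> 0" using SS_pos by simp
  consider "k = 0" | k0 where "k = Suc k0" "k < n" | k0 where "k = Suc k0" "k = n"
    using k by (cases k) (auto simp: le_less)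
  then show ?thesis
  proof cases
    case 1
    then have "0 < n" using n1 by simp
    then show ?thesis using 1 L2[of 0 k'] unfolding Hh_def Pp_0 by (auto simp: field_simps)
  next
    case 2
    have z: "zz k \<noteq> 0" using zz_nz k by simp
    have e: "2*k-1 = 2*k0+1" using 2 by simp
    have "(if k < n then w (2*k) * Fx k k' else 0) + (if 0 < k then w (2*k-1) * Fx (k-1) k' else 0)
       = zz k' * (Hh k' (Suc k0) - Hh k' k0) / zz k"
      using 2 L2[of k k'] L1[of k0 k'] e by (simp add: diff_divide_distrib right_diff_distrib)
    also have "\<dots> = (if k = k' then 1 else 0) - zz k * zz k' / SS"
      unfolding Hh_diff using 2 z S by (auto simp: field_simps power2_eq_square)
    finally show ?thesis .
  next
    case 3
    have z: "zz k \<noteq> 0" using zz_nz k by simp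
    have SSe: "SS = Pp k0 + (zz k)^2" unfolding SS_def using 3 Pp_Suc by simp
    have e: "2*k-1 = 2*k0+1" using 3 by simp
    have "(if k < n then w (2*k) * Fx k k' else 0) + (if 0 < k then w (2*k-1) * Fx (k-1) k' else 0)
       = - zz k' * Hh k' k0 / zz k"
      using 3 L1[of k0 k'] e by simp
    also have "\<dots> = (if k = k' then 1 else 0) - zz k * zz k' / SS"
    proof -
      have Pk: "Pp k0 = SS - (zz k)^2" using SSe by simp
      have c: "(k' \<le> k0) = (k \<noteq> k')" using 3 k' by auto
      show ?thesis unfolding Hh_def Pk c using z S by (auto simp: field_simps power2_eq_square)
    qed
    finally show ?thesis .
  qed
qed

lemma AX_entry:
  assumes i: "i < 2*n+1" and j: "j < 2*n+1"
  shows "(if i+1 < 2*n+1 then w i * Xf (i+1) j else 0) + (if 0 < i then w (i-1) * Xf (i-1) j else 0)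
    = (if i = j then 1 else 0) - zv i * zv j / SS"
proof (cases "even i")
  case True
  then obtain k where ik: "i = 2*k" by blast
  have k: "k \<le> n" using i ik by simp
  show ?thesis
  proof (cases "even j")
    case True
    then obtain k' where jk: "j = 2*k'" by blast
    have k': "k' \<le> n" using j jk by simp
    have lhs: "(if i+1 < 2*n+1 then w i * Xf (i+1) j else 0) + (if 0 < i then w (i-1) * Xf (i-1) j else 0)
      = (if k < n then w (2*k) * Fx k k' else 0) + (if 0 < k then w (2*k-1) * Fx (k-1) k' else 0)"
    proof (cases k)
      case 0
      then show ?thesis using ik jk n1 by (simp add: Xf_def)
    next
      case (Suc k0)
      have e: "2*k-1 = 2*k0+1" using Suc by simp
      show ?thesis using ik jk Suc e by (simp add: Xf_def)
    qed
    show ?thesis unfolding lhs AX_even[OF k k'] using ik jk by (simp add: zv_def)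
  next
    case False
    then obtain l' where jl: "j = 2*l'+1" using oddE by blast
    have "i \<noteq> j" using ik jl by presburger
    then show ?thesis using ik jl by (cases k) (auto simp: Xf_def zv_def)
  qed
next
  case False
  then obtain l where il: "i = 2*l+1" using oddE by blast
  have l: "l < n" using i il by simp
  show ?thesis
  proof (cases "even j")
    case True
    then obtain k' where jk: "j = 2*k'" by blast
    have "i \<noteq> j" using il jk by presburger
    then show ?thesis using il jk by (auto simp: Xf_def zv_def)
  next
    case False
    then obtain l' where jl: "j = 2*l'+1" using oddE by blast
    have l': "l' < n" using j jl by simp
    have "(if i+1 < 2*n+1 then w i * Xf (i+1) j else 0) + (if 0 < i then w (i-1) * Xf (i-1) j else 0)
      = w (2*l+1) * Fx l' (Suc l) + w (2*l) * Fx l' l"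
      using il jl l by (simp add: Xf_def)
    also have "\<dots> = (if l = l' then 1 else 0)" by (rule AX_odd[OF l l'])
    finally show ?thesis using il jl by (simp add: zv_def)
  qed
qed

abbreviation AA :: "real mat" where "AA \<equiv> path_adj (2*n+1) w"

lemma AA_carrier: "AA \<in> carrier_mat (2*n+1) (2*n+1)" by (simp add: path_adj_def)
lemma Xm_carrier: "Xm \<in> carrier_mat (2*n+1) (2*n+1)" by (simp add: Xm_def)
lemma Pm_carrier: "Pm \<in> carrier_mat (2*n+1) (2*n+1)" by (simp add: Pm_def)

lemma AA_entry: "i < 2*n+1 \<Longrightarrow> m < 2*n+1 \<Longrightarrow>
  AA $$ (i, m) = (if m = i+1 then w i else if i = m+1 then w m else 0)"
  by (simp add: path_adj_def)

lemma AX: "AA * Xm = Pm"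
proof (rule eq_matI)
  fix i j assume i: "i < dim_row Pm" and j: "j < dim_col Pm"
  then have i': "i < 2*n+1" and j': "j < 2*n+1" by (auto simp: Pm_def)
  have "(AA * Xm) $$ (i, j) = (\<Sum>m<2*n+1. AA $$ (i, m) * Xm $$ (m, j))"
    by (rule mult_mat_sum[OF AA_carrier Xm_carrier i' j'])
  also have "\<dots> = (\<Sum>m<2*n+1. (if m = i+1 then w i else if i = m+1 then w m else 0) * Xf m j)"
  proof (intro sum.cong refl)
    fix m assume "m \<in> {..<2*n+1}"
    then have m: "m < 2*n+1" by simp
    have "Xm $$ (m, j) = Xf m j" unfolding Xm_def using m j' by simp
    then show "AA $$ (i, m) * Xm $$ (m, j) = (if m = i+1 then w i else if i = m+1 then w m else 0) * Xf m j"
      using AA_entry[OF i' m] by simp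
  qed
  also have "\<dots> = (if i+1 < 2*n+1 then w i * Xf (i+1) j else 0) + (if 0 < i then w (i-1) * Xf (i-1) j else 0)"
    by (rule tri_sum[OF i'])
  also have "\<dots> = Pm $$ (i, j)" using AX_entry[OF i' j'] i' j' by (simp add: Pm_def)
  finally show "(AA * Xm) $$ (i, j) = Pm $$ (i, j)" .
qed (auto simp: Pm_def path_adj_def Xm_def)

lemma Xm_sym: "transpose_mat Xm = Xm"
  by (rule eq_matI) (auto simp: Xm_def Xf_def)

lemma AA_sym: "transpose_mat AA = AA"
  by (rule eq_matI) (auto simp: path_adj_def)

lemma Pm_sym: "transpose_mat Pm = Pm"
  by (rule eq_matI) (auto simp: Pm_def)

lemma XA: "Xm * AA = Pm"
proof -
  have "transpose_mat (AA * Xm) = transpose_mat Xm * transpose_mat AA"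
    by (rule transpose_mult[OF AA_carrier Xm_carrier])
  then show ?thesis using AX Xm_sym AA_sym Pm_sym by simp
qed

lemma Pm_mult:
  assumes M: "M \<in> carrier_mat (2*n+1) (2*n+1)" and i: "i < 2*n+1" and j: "j < 2*n+1"
  shows "(Pm * M) $$ (i, j) = M $$ (i, j) - zv i / SS * (\<Sum>m<2*n+1. zv m * M $$ (m, j))"
proof -
  have "(Pm * M) $$ (i, j) = (\<Sum>m<2*n+1. Pm $$ (i, m) * M $$ (m, j))"
    by (rule mult_mat_sum[OF Pm_carrier M i j])
  also have "\<dots> = (\<Sum>m<2*n+1. (if m = i then M $$ (m, j) else 0) - zv i / SS * (zv m * M $$ (m, j)))"
  proof (intro sum.cong refl)
    fix m assume "m \<in> {..<2*n+1}"
    then have m: "m < 2*n+1" by simp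
    have pe: "Pm $$ (i, m) = (if i = m then 1 else 0) - zv i * zv m / SS" unfolding Pm_def using m i by simp
    show "Pm $$ (i, m) * M $$ (m, j) = (if m = i then M $$ (m, j) else 0) - zv i / SS * (zv m * M $$ (m, j))"
      unfolding pe by (auto simp: algebra_simps)
  qed
  also have "\<dots> = M $$ (i, j) - zv i / SS * (\<Sum>m<2*n+1. zv m * M $$ (m, j))"
    using i by (simp add: sum_subtractf sum_distrib_left sum.delta' del: sum.lessThan_Suc)
  finally show ?thesis .
qed

lemma zX: "j < 2*n+1 \<Longrightarrow> (\<Sum>m<2*n+1. zv m * Xm $$ (m, j)) = 0"
proof -
  assume j: "j < 2*n+1"
  have "(\<Sum>m<2*n+1. zv m * Xm $$ (m, j)) = (\<Sum>k\<le>n. zz k * Xf (2*k) j)"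
    unfolding sum_even_odd using j by (simp add: zv_def Xm_def)
  also have "\<dots> = 0"
  proof (cases "even j")
    case True
    then show ?thesis by (simp add: Xf_def)
  next
    case False
    then obtain l where jl: "j = 2*l+1" using oddE by blast
    have l: "l \<le> n" using j jl by simp
    have "(\<Sum>k\<le>n. zz k * Xf (2*k) j) = (\<Sum>k\<le>n. (zz k)^2 * Hh k l) / (w (2*l) * zz l)"
      unfolding sum_divide_distrib using jl
      by (intro sum.cong) (auto simp: Xf_def Fx_def power2_eq_square)
    also have "(\<Sum>k\<le>n. (zz k)^2 * Hh k l) = (\<Sum>k\<le>n. (if k \<le> l then (zz k)^2 else 0)) - Pp l / SS * SS"
    proof -
      have "(\<Sum>k\<le>n. (zz k)^2 * Hh k l) = (\<Sum>k\<le>n. (if k \<le> l then (zz k)^2 else 0) - Pp l / SS * (zz k)^2)"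
        by (intro sum.cong refl) (simp add: Hh_def algebra_simps)
      also have "\<dots> = (\<Sum>k\<le>n. (if k \<le> l then (zz k)^2 else 0)) - Pp l / SS * (\<Sum>k\<le>n. (zz k)^2)"
        by (simp add: sum_subtractf sum_distrib_left)
      also have "(\<Sum>k\<le>n. (zz k)^2) = SS" by (simp add: SS_def Pp_def)
      finally show ?thesis .
    qed
    also have "(\<Sum>k\<le>n. (if k \<le> l then (zz k)^2 else 0)) = Pp l"
    proof -
      have "(\<Sum>k\<le>n. (if k \<le> l then (zz k)^2 else 0)) = (\<Sum>k\<in>{..n} \<inter> {..l}. (zz k)^2)"
        by (simp only: sum.inter_restrict[OF finite_atMost]) (simp add: atMost_iff)
      also have "{..n} \<inter> {..l} = {..l}" using l by auto
      finally show ?thesis using l by (simp add: Pp_def min_def)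
    qed
    finally show ?thesis using SS_pos by simp
  qed
  finally show ?thesis .
qed

lemma zA: "j < 2*n+1 \<Longrightarrow> (\<Sum>m<2*n+1. zv m * AA $$ (m, j)) = 0"
proof -
  assume j: "j < 2*n+1"
  have "(\<Sum>m<2*n+1. zv m * AA $$ (m, j)) = (\<Sum>m<2*n+1. (if m = j+1 then w j else if j = m+1 then w m else 0) * zv m)"
  proof (intro sum.cong refl)
    fix m assume "m \<in> {..<2*n+1}"
    then have m: "m < 2*n+1" by simp
    show "zv m * AA $$ (m, j) = (if m = j+1 then w j else if j = m+1 then w m else 0) * zv m"
      using AA_entry[OF m j] by auto
  qed
  also have "\<dots> = (if j+1 < 2*n+1 then w j * zv (j+1) else 0) + (if 0 < j then w (j-1) * zv (j-1) else 0)"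
    by (rule tri_sum[OF j])
  also have "\<dots> = 0"
  proof (cases "even j")
    case True
    then show ?thesis by (auto simp: zv_def)
  next
    case False
    then obtain l where jl: "j = 2*l+1" using oddE by blast
    have l: "l < n" using j jl by simp
    show ?thesis using zz_rel[OF l] jl l by (simp add: zv_def)
  qed
  finally show ?thesis .
qed

lemma PX: "Pm * Xm = Xm"
proof (rule eq_matI)
  fix i j assume "i < dim_row Xm" "j < dim_col Xm"
  then have i: "i < 2*n+1" and j: "j < 2*n+1" by (auto simp: Xm_def)
  show "(Pm * Xm) $$ (i, j) = Xm $$ (i, j)" using Pm_mult[OF Xm_carrier i j] zX[OF j] by simp
qed (auto simp: Pm_def Xm_def)

lemma PA: "Pm * AA = AA"
proof (rule eq_matI)
  fix i j assume "i < dim_row AA" "j < dim_col AA"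
  then have i: "i < 2*n+1" and j: "j < 2*n+1" by (auto simp: path_adj_def)
  show "(Pm * AA) $$ (i, j) = AA $$ (i, j)" using Pm_mult[OF AA_carrier i j] zA[OF j] by simp
qed (auto simp: Pm_def path_adj_def)

lemma GI: "group_inverse AA = Xm"
proof -
  have gi: "is_group_inverse AA Xm"
    unfolding is_group_inverse_def using Xm_carrier AX XA PX PA by (simp add: path_adj_def)
  show ?thesis unfolding group_inverse_def
  proof (rule the_equality)
    show "is_group_inverse AA Xm" by (rule gi)
  next
    fix Y assume "is_group_inverse AA Y"
    then have Y: "Y \<in> carrier_mat (2*n+1) (2*n+1)" "AA * Y * AA = AA" "Y * AA * Y = Y" "AA * Y = Y * AA"
      by (auto simp: is_group_inverse_def path_adj_def)
    show "Y = Xm"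
      by (rule group_inverse_unique[OF AA_carrier Y(1) Xm_carrier Y(2-4)])
         (use AX XA PX PA in auto)
  qed
qed

lemma edge_iff:
  assumes i: "i < 2*n+1" and j: "j < 2*n+1" and ij: "i \<noteq> j"
  shows "mat_edge Xm i j \<longleftrightarrow> odd (i + j)"
proof -
  have "mat_edge Xm i j \<longleftrightarrow> Xf i j \<noteq> 0"
    unfolding mat_edge_def using i j ij by (simp add: Xm_def)
  also have "\<dots> \<longleftrightarrow> odd (i + j)"
  proof (cases "odd i")
    case True
    show ?thesis
    proof (cases "even j")
      case True
      have "i div 2 < n" "j div 2 \<le> n" using \<open>odd i\<close> i j by presburger+
      then have "Fx (i div 2) (j div 2) \<noteq> 0" by (intro Fx_nz)
      then show ?thesis using \<open>odd i\<close> True by (simp add: Xf_def)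
    next
      case False
      then show ?thesis using \<open>odd i\<close> by (simp add: Xf_def)
    qed
  next
    case False
    show ?thesis
    proof (cases "odd j")
      case True
      have "j div 2 < n" "i div 2 \<le> n" using True i j by presburger+
      then have "Fx (j div 2) (i div 2) \<noteq> 0" by (intro Fx_nz)
      then show ?thesis using \<open>\<not> odd i\<close> True by (simp add: Xf_def)
    next
      case False
      then show ?thesis using \<open>\<not> odd i\<close> by (simp add: Xf_def)
    qed
  qed
  finally show ?thesis .
qed

lemma main_result:
  shows "(\<forall>i < 2 * n. mat_edge (group_inverse AA) i (i + 1))
    \<and> (\<forall>i < 2 * n + 1. \<forall>j < 2 * n + 1. i \<noteq> j \<longrightarrow> (mat_edge (group_inverse AA) i j \<longleftrightarrow> odd (i + j)))
    \<and> (n \<ge> 2 \<longrightarrow> (\<forall>i < 2 * n + 1. mat_degree (group_inverse AA) i \<noteq> 1))"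
proof (unfold GI, intro conjI allI impI)
  fix i assume "i < 2*n"
  then show "mat_edge Xm i (i+1)" using edge_iff[of i "i+1"] by simp
next
  fix i j assume "i < 2*n+1" "j < 2*n+1" "i \<noteq> j"
  then show "mat_edge Xm i j \<longleftrightarrow> odd (i + j)" by (rule edge_iff)
next
  fix i assume n2: "2 \<le> n" and i: "i < 2*n+1"
  have fin: "finite {j. mat_edge Xm i j}"
    by (rule finite_subset[of _ "{..<2*n+1}"]) (auto simp: mat_edge_def Xm_def)
  obtain a b where ab: "a \<noteq> b" "mat_edge Xm i a" "mat_edge Xm i b"
  proof (cases "even i")
    case True
    have "i \<noteq> 1" "i \<noteq> 3" using True by presburger+
    then have "mat_edge Xm i 1" "mat_edge Xm i 3"
      using edge_iff[of i 1] edge_iff[of i 3] True i n2 by auto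
    then show ?thesis using that[of 1 3] by auto
  next
    case False
    have "i \<noteq> 0" "i \<noteq> 2" using False by presburger+
    then have "mat_edge Xm i 0" "mat_edge Xm i 2"
      using edge_iff[of i 0] edge_iff[of i 2] False i n2 by auto
    then show ?thesis using that[of 0 2] by auto
  qed
  have "{a, b} \<subseteq> {j. mat_edge Xm i j}" using ab by auto
  then have "card {a, b} \<le> card {j. mat_edge Xm i j}" by (rule card_mono[OF fin])
  then have "2 \<le> mat_degree Xm i" using ab(1) by (simp add: mat_degree_def)
  then show "mat_degree Xm i \<noteq> 1" by simp
qed

end

theorem proposition2p14:
  fixes n :: nat and w :: "nat \<Rightarrow> real"
  assumes "n \<ge> 1"
    and "\<And>i. i < 2 * n \<Longrightarrow> w i \<noteq> 0"
  defines "G \<equiv> group_inverse (path_adj (2 * n + 1) w)"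
  shows "(\<forall>i < 2 * n. mat_edge G i (i + 1))
    \<and> (\<forall>i < 2 * n + 1. \<forall>j < 2 * n + 1. i \<noteq> j \<longrightarrow> (mat_edge G i j \<longleftrightarrow> odd (i + j)))
    \<and> (n \<ge> 2 \<longrightarrow> (\<forall>i < 2 * n + 1. mat_degree G i \<noteq> 1))"
  unfolding G_def by (rule main_result[OF assms(1,2)])

end
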